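(* Assume the Diagonal Conjecture (DC) holds: for every $r \ge 2$, all integers $3 \le s \le t$ and all integers $k_3,\dots,k_r \ge 2$, we have $R(s,t,k_3,\dots,k_r) \ge R(s-1,t+1,k_3,\dots,k_r)$. If $\lim_{r\to\infty} R_r(3)^{1/r}$ is finite, then $\lim_{r\to\infty} R_r(k)^{1/r}$ is finite for every integer $k \ge 3$.
   Context: $R(k_1,\dots,k_r)$ denotes the multicolor Ramsey number: the least $n$ such that every coloring of the edges of $K_n$ with $r$ colors contains, for some $i$, a complete subgraph $K_{k_i}$ all of whose edges have color $i$; it is symmetric in its arguments. $R_r(k)=R(k,\dots,k)$ with $r$ arguments equal to $k$. It is known that for each $k$ the limit $\lim_{r\to\infty} R_r(k)^{1/r}$ exists (possibly infinite). *)

theory Defs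
  imports Complex_Main
begin

definition ramsey_arrows :: "nat \<Rightarrow> nat list \<Rightarrow> bool" where
  "ramsey_arrows n ks \<longleftrightarrow>
     (\<forall>c :: nat set \<Rightarrow> nat.
        (\<forall>x<n. \<forall>y<n. x \<noteq> y \<longrightarrow> c {x, y} < length ks) \<longrightarrow>
        (\<exists>i<length ks. \<exists>S. S \<subseteq> {..<n} \<and> card S = ks ! i \<and>
            (\<forall>x\<in>S. \<forall>y\<in>S. x \<noteq> y \<longrightarrow> c {x, y} = i)))"

definition ramsey :: "nat list \<Rightarrow> nat" where
  "ramsey ks = (LEAST n. ramsey_arrows n ks)"

definition diagonal_conjecture :: bool where
  "diagonal_conjecture \<longleftrightarrow>
     (\<forall>s t ks. 3 \<le> s \<longrightarrow> s \<le> t \<longrightarrow> (\<forall>k\<in>set ks. 2 \<le> k) \<longrightarrow>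
        ramsey ((s - 1) # (t + 1) # ks) \<le> ramsey (s # t # ks))"

end

theory Submission
  imports Defs "HOL-Library.Ramsey" "HOL-Combinatorics.List_Permutation"
begin

lemma arrows_exists: "\<exists>N. ramsey_arrows N ks"
proof -
  obtain N :: nat where N: "partn_lst {..<N} ks 2" using ramsey_full[of ks 2] by blast
  show ?thesis
  proof (intro exI, unfold ramsey_arrows_def, intro allI impI)
    fix c :: "nat set \<Rightarrow> nat"
    assume c: "\<forall>x<N. \<forall>y<N. x \<noteq> y \<longrightarrow> c {x, y} < length ks"
    have "c \<in> nsets {..<N} 2 \<rightarrow> {..<length ks}"
      using c by (auto simp: nsets_2_eq)
    then obtain i H where i: "i < length ks" "H \<in> nsets {..<N} (ks!i)" "c ` (nsets H 2) \<subseteq> {i}"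
      using partn_lstE[OF N] by metis
    have cl: "\<forall>x\<in>H. \<forall>y\<in>H. x \<noteq> y \<longrightarrow> c {x, y} = i"
      using i(3) by (metis doubleton_in_nsets_2 image_subset_iff singletonD)
    show "\<exists>i<length ks. \<exists>S\<subseteq>{..<N}. card S = ks ! i \<and> (\<forall>x\<in>S. \<forall>y\<in>S. x \<noteq> y \<longrightarrow> c {x, y} = i)"
      using i cl by (intro exI[of _ i] conjI exI[of _ H]) (auto simp: nsets_def)
  qed
qed

lemma arrows_mono: "ramsey_arrows n ks \<Longrightarrow> n \<le> m \<Longrightarrow> ramsey_arrows m ks"
  unfolding ramsey_arrows_def
proof (intro allI impI)
  fix c :: "nat set \<Rightarrow> nat"
  assume h: "\<forall>c :: nat set \<Rightarrow> nat. (\<forall>x<n. \<forall>y<n. x \<noteq> y \<longrightarrow> c {x, y} < length ks) \<longrightarrow>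
        (\<exists>i<length ks. \<exists>S. S \<subseteq> {..<n} \<and> card S = ks ! i \<and> (\<forall>x\<in>S. \<forall>y\<in>S. x \<noteq> y \<longrightarrow> c {x, y} = i))"
    and nm: "n \<le> m" and c: "\<forall>x<m. \<forall>y<m. x \<noteq> y \<longrightarrow> c {x, y} < length ks"
  from c nm have "\<forall>x<n. \<forall>y<n. x \<noteq> y \<longrightarrow> c {x, y} < length ks" by auto
  with h obtain i S where "i<length ks" "S \<subseteq> {..<n}" "card S = ks ! i" "(\<forall>x\<in>S. \<forall>y\<in>S. x \<noteq> y \<longrightarrow> c {x, y} = i)"
    by blast
  then show "\<exists>i<length ks. \<exists>S. S \<subseteq> {..<m} \<and> card S = ks ! i \<and> (\<forall>x\<in>S. \<forall>y\<in>S. x \<noteq> y \<longrightarrow> c {x, y} = i)"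
    using nm by (intro exI[of _ i] conjI exI[of _ S]) auto
qed

lemma arrows_ramsey: "ramsey_arrows (ramsey ks) ks"
  unfolding ramsey_def using arrows_exists by (rule LeastI_ex)

lemma arrows_iff: "ramsey_arrows n ks \<longleftrightarrow> ramsey ks \<le> n"
  using arrows_mono arrows_ramsey unfolding ramsey_def
  by (metis Least_le)

lemma ramsey_eqI: "(\<And>n. ramsey_arrows n xs \<longleftrightarrow> ramsey_arrows n ys) \<Longrightarrow> ramsey xs = ramsey ys"
  unfolding ramsey_def by simp

lemma arrows_perm:
  assumes "mset xs = mset ys" "ramsey_arrows n xs"
  shows "ramsey_arrows n ys"
proof -
  obtain f where f: "bij_betw f {..<length xs} {..<length ys}" "\<forall>i<length xs. xs ! i = ys ! (f i)"
    using permutation_Ex_bij[OF assms(1)] by blast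
  have len: "length xs = length ys" using assms(1) mset_eq_length by blast
  show ?thesis unfolding ramsey_arrows_def
  proof (intro allI impI)
    fix c :: "nat set \<Rightarrow> nat"
    assume c: "\<forall>x<n. \<forall>y<n. x \<noteq> y \<longrightarrow> c {x, y} < length ys"
    define g where "g = inv_into {..<length xs} f"
    have fim: "f ` {..<length xs} = {..<length ys}" using f(1) by (simp add: bij_betw_def)
    have g1: "g z < length xs" if "z < length ys" for z
    proof -
      have "z \<in> f ` {..<length xs}" using fim that by simp
      then have "inv_into {..<length xs} f z \<in> {..<length xs}" by (rule inv_into_into)
      then show ?thesis unfolding g_def by simp
    qed
    have g2: "z < length ys \<Longrightarrow> f (g z) = z" for z
      using f(1) unfolding g_def by (simp add: bij_betw_inv_into_right)
    have "\<forall>x<n. \<forall>y<n. x \<noteq> y \<longrightarrow> (g \<circ> c) {x, y} < length xs"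
      using c g1 by auto
    from mp[OF assms(2)[unfolded ramsey_arrows_def, THEN spec[where x="g \<circ> c"]] this] obtain i S where iS: "i<length xs" "S \<subseteq> {..<n}" "card S = xs ! i"
        "\<forall>x\<in>S. \<forall>y\<in>S. x \<noteq> y \<longrightarrow> (g \<circ> c) {x, y} = i"
      by blast
    have fi: "f i < length ys" using f(1) iS(1) by (auto simp: bij_betw_def)
    have "\<forall>x\<in>S. \<forall>y\<in>S. x \<noteq> y \<longrightarrow> c {x, y} = f i"
    proof (intro ballI impI)
      fix x y assume "x \<in> S" "y \<in> S" "x \<noteq> y"
      then have "g (c {x,y}) = i" using iS by auto
      moreover have "c {x,y} < length ys" using iS(2) c \<open>x \<in> S\<close> \<open>y \<in> S\<close> \<open>x \<noteq> y\<close> by (meson lessThan_iff subsetD)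
      ultimately show "c {x, y} = f i" using g2 by metis
    qed
    then show "\<exists>i<length ys. \<exists>S. S \<subseteq> {..<n} \<and> card S = ys ! i \<and> (\<forall>x\<in>S. \<forall>y\<in>S. x \<noteq> y \<longrightarrow> c {x, y} = i)"
      using iS f(2) fi by (intro exI[of _ "f i"] conjI exI[of _ S]) auto
  qed
qed

lemma ramsey_perm: "mset xs = mset ys \<Longrightarrow> ramsey xs = ramsey ys"
  by (rule ramsey_eqI) (metis arrows_perm)

lemma arrows_2: "ramsey_arrows n (2 # ks) \<longleftrightarrow> ramsey_arrows n ks"
proof
  assume h: "ramsey_arrows n (2 # ks)"
  show "ramsey_arrows n ks" unfolding ramsey_arrows_def
  proof (intro allI impI)
    fix c :: "nat set \<Rightarrow> nat"
    assume c: "\<forall>x<n. \<forall>y<n. x \<noteq> y \<longrightarrow> c {x, y} < length ks"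
    have "\<forall>x<n. \<forall>y<n. x \<noteq> y \<longrightarrow> (Suc \<circ> c) {x, y} < length (2 # ks)"
      using c by simp
    from mp[OF h[unfolded ramsey_arrows_def, THEN spec[where x="Suc \<circ> c"]] this]
    obtain i S where iS: "i<length (2#ks)" "S \<subseteq> {..<n}" "card S = (2#ks) ! i"
        "\<forall>x\<in>S. \<forall>y\<in>S. x \<noteq> y \<longrightarrow> (Suc \<circ> c) {x, y} = i"
      by blast
    show "\<exists>i<length ks. \<exists>S. S \<subseteq> {..<n} \<and> card S = ks ! i \<and> (\<forall>x\<in>S. \<forall>y\<in>S. x \<noteq> y \<longrightarrow> c {x, y} = i)"
    proof (cases i)
      case 0
      then have "card S = 2" using iS(3) by simp
      then obtain x y where xy: "x \<noteq> y" "S = {x,y}" by (meson card_2_iff)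
      then have "x \<in> S" "y \<in> S" by simp_all
      then have "(Suc \<circ> c) {x, y} = i" using iS(4) xy(1) by blast
      then show ?thesis using 0 by simp
    next
      case (Suc j)
      have j: "j < length ks" using iS(1) Suc by simp
      have cS: "card S = ks ! j" using iS(3) Suc by simp
      have cl: "\<forall>x\<in>S. \<forall>y\<in>S. x \<noteq> y \<longrightarrow> c {x, y} = j"
      proof (intro ballI impI)
        fix x y assume "x \<in> S" "y \<in> S" "x \<noteq> y"
        then have "(Suc \<circ> c) {x, y} = i" using iS(4) by blast
        then show "c {x, y} = j" using Suc by simp
      qed
      show ?thesis using j cS cl iS(2) by blast
    qed
  qed
next
  assume h: "ramsey_arrows n ks"
  show "ramsey_arrows n (2 # ks)" unfolding ramsey_arrows_def
  proof (intro allI impI)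
    fix c :: "nat set \<Rightarrow> nat"
    assume c: "\<forall>x<n. \<forall>y<n. x \<noteq> y \<longrightarrow> c {x, y} < length (2 # ks)"
    show "\<exists>i<length (2#ks). \<exists>S. S \<subseteq> {..<n} \<and> card S = (2#ks) ! i \<and> (\<forall>x\<in>S. \<forall>y\<in>S. x \<noteq> y \<longrightarrow> c {x, y} = i)"
    proof (cases "\<exists>x<n. \<exists>y<n. x \<noteq> y \<and> c {x, y} = 0")
      case True
      then obtain x y where xy: "x<n" "y<n" "x \<noteq> y" "c {x,y} = 0" by blast
      have cl: "\<forall>u\<in>{x,y}. \<forall>v\<in>{x,y}. u \<noteq> v \<longrightarrow> c {u, v} = 0"
      proof (intro ballI impI)
        fix u v assume "u \<in> {x,y}" "v \<in> {x,y}" "u \<noteq> v"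
        then have "{u,v} = {x,y}" by blast
        then show "c {u,v} = 0" using xy(4) by simp
      qed
      have "{x,y} \<subseteq> {..<n}" using xy by simp
      moreover have "card {x,y} = (2#ks) ! 0" using xy(3) by simp
      ultimately show ?thesis using cl by (intro exI[of _ 0] conjI exI[of _ "{x,y}"]) simp_all
    next
      case False
      have F0: "\<forall>x<n. \<forall>y<n. x \<noteq> y \<longrightarrow> c {x, y} \<noteq> 0" using False by auto
      have F: "c {x, y} \<noteq> 0" if "x < n" "y < n" "x \<noteq> y" for x y
        using F0 that by auto
      have "\<forall>x<n. \<forall>y<n. x \<noteq> y \<longrightarrow> (\<lambda>S. c S - 1) {x, y} < length ks"
      proof (intro allI impI)
        fix x y assume xy: "x < n" "y < n" "x \<noteq> y"
        then have "c {x, y} < Suc (length ks)" using c by simp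
        moreover have "c {x, y} \<noteq> 0" using F xy by simp
        ultimately show "(\<lambda>S. c S - 1) {x, y} < length ks" by simp
      qed
      from mp[OF h[unfolded ramsey_arrows_def, THEN spec[where x="\<lambda>S. c S - 1"]] this]
      obtain i S where iS: "i<length ks" "S \<subseteq> {..<n}" "card S = ks ! i"
        "\<forall>x\<in>S. \<forall>y\<in>S. x \<noteq> y \<longrightarrow> c {x, y} - 1 = i"
        by blast
      have cl: "\<forall>x\<in>S. \<forall>y\<in>S. x \<noteq> y \<longrightarrow> c {x, y} = Suc i"
      proof (intro ballI impI)
        fix x y assume xy: "x \<in> S" "y \<in> S" "x \<noteq> y"
        then have "x < n" "y < n" using iS(2) by auto
        then have "c {x,y} \<noteq> 0" using F xy(3) by simp
        moreover have "c {x,y} - 1 = i" using iS(4) xy by blast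
        ultimately show "c {x,y} = Suc i" by simp
      qed
      have "Suc i < length (2 # ks)" "card S = (2 # ks) ! Suc i" using iS by simp_all
      then show ?thesis using cl iS(2) by blast
    qed
  qed
qed

lemma ramsey_2: "ramsey (2 # ks) = ramsey ks"
  by (rule ramsey_eqI) (rule arrows_2)

lemma not_arrows_1:
  assumes k: "\<forall>k\<in>set ks. 2 \<le> k"
  shows "\<not> ramsey_arrows 1 ks"
proof
  assume h: "ramsey_arrows 1 ks"
  have "\<forall>x<1::nat. \<forall>y<1::nat. x \<noteq> y \<longrightarrow> (\<lambda>_. 0::nat) {x, y} < length ks" by (auto simp: less_one)
  from mp[OF h[unfolded ramsey_arrows_def, THEN spec[where x="\<lambda>_. 0::nat"]] this]
  obtain i S where iS: "i<length ks" "S \<subseteq> {..<1::nat}" "card S = ks ! i"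
    by blast
  have "card S \<le> card {..<1::nat}" by (rule card_mono[OF finite_lessThan iS(2)])
  then have c1: "card S \<le> 1" by simp
  have "ks ! i \<in> set ks" using iS(1) by (rule nth_mem)
  then have "2 \<le> ks ! i" using k by blast
  then show False using c1 iS(3) by linarith
qed

lemma ramsey_ge2: "\<forall>k\<in>set ks. 2 \<le> k \<Longrightarrow> ramsey ks \<ge> 2"
  using not_arrows_1[of ks] arrows_iff[of 1 ks] by linarith


lemma dc_step:
  assumes dc: diagonal_conjecture
  shows "\<forall>x\<in>set ks. 2 \<le> x \<Longrightarrow> ramsey ((d + 3) # ks) \<le> ramsey (replicate (d + 1) 3 @ ks)"
proof (induction d arbitrary: ks)
  case 0
  then show ?case by simp
next
  case (Suc d)
  have DC: "\<forall>s t ks. 3 \<le> s \<longrightarrow> s \<le> t \<longrightarrow> (\<forall>k\<in>set ks. 2 \<le> k) \<longrightarrow>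
        ramsey ((s - 1) # (t + 1) # ks) \<le> ramsey (s # t # ks)"
    using dc unfolding diagonal_conjecture_def by blast
  have e1: "ramsey ((Suc d + 3) # ks) = ramsey ((3 - 1) # (d + 3 + 1) # ks)"
    using ramsey_2[of "(Suc d + 3) # ks"] by (simp add: numeral_eq_Suc)
  have e2: "ramsey ((3 - 1) # (d + 3 + 1) # ks) \<le> ramsey (3 # (d + 3) # ks)"
    using DC[rule_format, of 3 "d + 3" ks] Suc.prems by simp
  have e3: "ramsey (3 # (d + 3) # ks) = ramsey ((d + 3) # 3 # ks)"
    by (rule ramsey_perm) simp
  have e4: "ramsey ((d + 3) # 3 # ks) \<le> ramsey (replicate (d + 1) 3 @ 3 # ks)"
    using Suc.IH[of "3 # ks"] Suc.prems by simp
  have e5: "replicate (d + 1) 3 @ 3 # ks = replicate (Suc d + 1) 3 @ ks"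
    by (simp add: replicate_app_Cons_same)
  have fin: "ramsey ((Suc d + 3) # ks) \<le> ramsey (replicate (d + 1) 3 @ 3 # ks)"
    using e1 e2 e3 e4 by linarith
  show ?case using fin unfolding e5 .
qed

lemma dc_main:
  assumes dc: diagonal_conjecture and k: "3 \<le> k"
  shows "\<forall>x\<in>set ks. 2 \<le> x \<Longrightarrow> ramsey (replicate r k @ ks) \<le> ramsey (replicate (r * (k - 2)) 3 @ ks)"
proof (induction r arbitrary: ks)
  case 0
  then show ?case by simp
next
  case (Suc r)
  have "ramsey (replicate (Suc r) k @ ks) = ramsey (k # (replicate r k @ ks))" by simp
  also have "\<dots> \<le> ramsey (replicate (k - 2) 3 @ replicate r k @ ks)"
  proof -
    have "\<exists>d. k = d + 3" using k by presburger
    then obtain d where kd: "k = d + 3" by blast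
    have pr: "\<forall>x\<in>set (replicate r k @ ks). 2 \<le> x" using Suc.prems k by auto
    show ?thesis using dc_step[OF dc pr[unfolded kd], of d] unfolding kd by simp
  qed
  also have "\<dots> = ramsey (replicate r k @ (replicate (k - 2) 3 @ ks))"
    by (rule ramsey_perm) simp
  also have "\<dots> \<le> ramsey (replicate (r * (k - 2)) 3 @ replicate (k - 2) 3 @ ks)"
  proof -
    have "\<forall>x\<in>set (replicate (k - 2) 3 @ ks). 2 \<le> x" using Suc.prems by auto
    then show ?thesis by (rule Suc.IH)
  qed
  also have "replicate (r * (k - 2)) 3 @ replicate (k - 2) 3 @ ks = replicate (Suc r * (k - 2)) 3 @ ks"
    by (simp add: replicate_add[symmetric] add.commute)
  finally show ?case .
qed

lemma dc_bound:
  assumes dc: diagonal_conjecture and k: "3 \<le> k"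
  shows "ramsey (replicate r k) \<le> ramsey (replicate (r * (k - 2)) 3)"
  using dc_main[OF dc k, of "[]" r] by simp

lemma not_arrows_prod:
  assumes A: "\<not> ramsey_arrows n A" and B: "\<not> ramsey_arrows m B"
  shows "\<not> ramsey_arrows (n * m) (A @ B)"
proof
  assume h: "ramsey_arrows (n * m) (A @ B)"
  from A have "\<exists>c1. (\<forall>x<n. \<forall>y<n. x \<noteq> y \<longrightarrow> c1 {x, y} < length A) \<and> (\<not> (\<exists>i<length A. \<exists>S. S \<subseteq> {..<n} \<and> card S = A ! i \<and> (\<forall>x\<in>S. \<forall>y\<in>S. x \<noteq> y \<longrightarrow> c1 {x, y} = i)))"
    unfolding ramsey_arrows_def by (simp only: not_all not_imp)
  then obtain c1 :: "nat set \<Rightarrow> nat" where c1both: "(\<forall>x<n. \<forall>y<n. x \<noteq> y \<longrightarrow> c1 {x, y} < length A) \<and> (\<not> (\<exists>i<length A. \<exists>S. S \<subseteq> {..<n} \<and> card S = A ! i \<and> (\<forall>x\<in>S. \<forall>y\<in>S. x \<noteq> y \<longrightarrow> c1 {x, y} = i)))" ..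
  have c1: "\<forall>x<n. \<forall>y<n. x \<noteq> y \<longrightarrow> c1 {x, y} < length A" using c1both by (rule conjunct1)
  have nc1: "\<not> (\<exists>i<length A. \<exists>S. S \<subseteq> {..<n} \<and> card S = A ! i \<and> (\<forall>x\<in>S. \<forall>y\<in>S. x \<noteq> y \<longrightarrow> c1 {x, y} = i))" using c1both by (rule conjunct2)

  from B have "\<exists>c2. (\<forall>x<m. \<forall>y<m. x \<noteq> y \<longrightarrow> c2 {x, y} < length B) \<and> (\<not> (\<exists>i<length B. \<exists>S. S \<subseteq> {..<m} \<and> card S = B ! i \<and> (\<forall>x\<in>S. \<forall>y\<in>S. x \<noteq> y \<longrightarrow> c2 {x, y} = i)))"
    unfolding ramsey_arrows_def by (simp only: not_all not_imp)
  then obtain c2 :: "nat set \<Rightarrow> nat" where c2both: "(\<forall>x<m. \<forall>y<m. x \<noteq> y \<longrightarrow> c2 {x, y} < length B) \<and> (\<not> (\<exists>i<length B. \<exists>S. S \<subseteq> {..<m} \<and> card S = B ! i \<and> (\<forall>x\<in>S. \<forall>y\<in>S. x \<noteq> y \<longrightarrow> c2 {x, y} = i)))" ..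
  have c2: "\<forall>x<m. \<forall>y<m. x \<noteq> y \<longrightarrow> c2 {x, y} < length B" using c2both by (rule conjunct1)
  have nc2: "\<not> (\<exists>i<length B. \<exists>S. S \<subseteq> {..<m} \<and> card S = B ! i \<and> (\<forall>x\<in>S. \<forall>y\<in>S. x \<noteq> y \<longrightarrow> c2 {x, y} = i))" using c2both by (rule conjunct2)

  define d where "d = (\<lambda>v::nat. v div m)"
  define e where "e = (\<lambda>v::nat. v mod m)"
  define c where "c = (\<lambda>S. if (\<exists>a. d ` S = {a}) then length A + c2 (e ` S) else c1 (d ` S))"
  have de: "x = y" if "d x = d y" "e x = e y" for x y
  proof -
    have "x = d x * m + e x" unfolding d_def e_def by simp
    also have "\<dots> = d y * m + e y" using that by simp
    also have "\<dots> = y" unfolding d_def e_def by simp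
    finally show ?thesis .
  qed
  have dlt: "d x < n" if "x < n * m" for x
    using that unfolding d_def by (simp add: less_mult_imp_div_less)
  have elt: "e x < m" if "x < n * m" for x
  proof -
    have "m > 0" using that by (cases m) auto
    then show ?thesis unfolding e_def by simp
  qed
  have cdiff: "c {x, y} = c1 {d x, d y}" if "d x \<noteq> d y" for x y
  proof -
    have "\<not> (\<exists>a. d ` {x, y} = {a})" using that by (auto simp: doubleton_eq_iff)
    then show ?thesis unfolding c_def by simp
  qed
  have csame: "c {x, y} = length A + c2 {e x, e y}" if "d x = d y" for x y
  proof -
    have "d ` {x, y} = {d x}" using that by simp
    then show ?thesis unfolding c_def by auto
  qed
  have cok: "\<forall>x<n * m. \<forall>y<n * m. x \<noteq> y \<longrightarrow> c {x, y} < length (A @ B)"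
  proof (intro allI impI)
    fix x y assume xy: "x < n * m" "y < n * m" "x \<noteq> y"
    show "c {x, y} < length (A @ B)"
    proof (cases "d x = d y")
      case True
      then have "e x \<noteq> e y" using de[OF True] xy(3) by auto
      then have "c2 {e x, e y} < length B" using c2 elt xy(1,2) by simp
      then show ?thesis using csame[OF True] by simp
    next
      case False
      then have "c1 {d x, d y} < length A" using c1 dlt xy(1,2) by simp
      then show ?thesis using cdiff[OF False] by simp
    qed
  qed
  from mp[OF h[unfolded ramsey_arrows_def, THEN spec[where x="c"]] cok]
  obtain i S where iS: "i < length (A @ B)" "S \<subseteq> {..<n * m}" "card S = (A @ B) ! i"
    "\<forall>x\<in>S. \<forall>y\<in>S. x \<noteq> y \<longrightarrow> c {x, y} = i"
    by blast
  have Slt: "x < n * m" if "x \<in> S" for x using iS(2) that by auto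
  show False
  proof (cases "i < length A")
    case True
    have dd: "d x \<noteq> d y" if "x \<in> S" "y \<in> S" "x \<noteq> y" for x y
    proof
      assume "d x = d y"
      then have "c {x, y} \<ge> length A" using csame by simp
      moreover have "c {x, y} = i" using iS(4) that by simp
      ultimately show False using True by simp
    qed
    have inj: "inj_on d S" using dd by (meson inj_onI)
    have "d ` S \<subseteq> {..<n}" using Slt dlt by auto
    moreover have "card (d ` S) = A ! i"
    proof -
      have "card (d ` S) = card S" by (rule card_image[OF inj])
      moreover have "(A @ B) ! i = A ! i" using True by (simp add: nth_append)
      ultimately show ?thesis using iS(3) by simp
    qed
    moreover have "\<forall>u\<in>d ` S. \<forall>v\<in>d ` S. u \<noteq> v \<longrightarrow> c1 {u, v} = i"
    proof (intro ballI impI)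
      fix u v assume "u \<in> d ` S" "v \<in> d ` S" "u \<noteq> v"
      then obtain x y where xy: "x \<in> S" "y \<in> S" "u = d x" "v = d y" by auto
      then have ne: "d x \<noteq> d y" using \<open>u \<noteq> v\<close> by simp
      then have "x \<noteq> y" by auto
      then have "c {x, y} = i" using iS(4) xy(1,2) by simp
      then show "c1 {u, v} = i" using cdiff[OF ne] xy(3,4) by simp
    qed
    moreover note True
    ultimately have "\<exists>i<length A. \<exists>S. S \<subseteq> {..<n} \<and> card S = A ! i \<and> (\<forall>x\<in>S. \<forall>y\<in>S. x \<noteq> y \<longrightarrow> c1 {x, y} = i)"
      by (intro exI[of _ i] conjI exI[of _ "d ` S"]) assumption+
    then show False using nc1 by simp
  next
    case False
    have dd: "d x = d y" if "x \<in> S" "y \<in> S" "x \<noteq> y" for x y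
    proof (rule ccontr)
      assume ne: "d x \<noteq> d y"
      have "c1 {d x, d y} < length A" using c1 dlt Slt that ne by simp
      then have "c {x,y} < length A" using cdiff[OF ne] by simp
      moreover have "c {x, y} = i" using iS(4) that by simp
      ultimately show False using False by simp
    qed
    have ee: "e x \<noteq> e y" if "x \<in> S" "y \<in> S" "x \<noteq> y" for x y
    proof
      assume "e x = e y"
      then have "x = y" using de[OF dd[OF that]] by simp
      then show False using that(3) by simp
    qed
    have inj: "inj_on e S" using ee by (meson inj_onI)
    have "e ` S \<subseteq> {..<m}" using Slt elt by auto
    moreover have "card (e ` S) = B ! (i - length A)"
    proof -
      have "card (e ` S) = card S" by (rule card_image[OF inj])
      moreover have "(A @ B) ! i = B ! (i - length A)" using False by (simp add: nth_append)
      ultimately show ?thesis using iS(3) by simp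
    qed
    moreover have "\<forall>u\<in>e ` S. \<forall>v\<in>e ` S. u \<noteq> v \<longrightarrow> c2 {u, v} = i - length A"
    proof (intro ballI impI)
      fix u v assume "u \<in> e ` S" "v \<in> e ` S" "u \<noteq> v"
      then obtain x y where xy: "x \<in> S" "y \<in> S" "u = e x" "v = e y" by auto
      then have "x \<noteq> y" using \<open>u \<noteq> v\<close> by auto
      then have "c {x, y} = i" using iS(4) xy by simp
      moreover have "c {x, y} = length A + c2 {e x, e y}" by (rule csame[OF dd[OF xy(1,2) \<open>x \<noteq> y\<close>]])
      ultimately show "c2 {u, v} = i - length A" using xy by simp
    qed
    moreover have "i - length A < length B" using iS(1) False by simp
    ultimately have "\<exists>i<length B. \<exists>S. S \<subseteq> {..<m} \<and> card S = B ! i \<and> (\<forall>x\<in>S. \<forall>y\<in>S. x \<noteq> y \<longrightarrow> c2 {x, y} = i)"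
      by (intro exI[of _ "i - length A"] conjI exI[of _ "e ` S"]) assumption+
    then show False using nc2 by simp
  qed
qed

lemma ramsey_supermult:
  assumes "\<forall>x\<in>set A. 2 \<le> x" "\<forall>x\<in>set B. 2 \<le> x"
  shows "(ramsey A - 1) * (ramsey B - 1) \<le> ramsey (A @ B) - 1"
proof -
  have "\<not> ramsey_arrows (ramsey A - 1) A" using arrows_iff ramsey_ge2[OF assms(1)] by simp
  moreover have "\<not> ramsey_arrows (ramsey B - 1) B" using arrows_iff ramsey_ge2[OF assms(2)] by simp
  ultimately have "\<not> ramsey_arrows ((ramsey A - 1) * (ramsey B - 1)) (A @ B)" by (rule not_arrows_prod)
  then show ?thesis using arrows_iff by simp
qed



lemma superadd_mult:
  fixes a :: "nat \<Rightarrow> real"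
  assumes sup: "\<And>m n. a m + a n \<le> a (m + n)" and nn: "\<And>n. 0 \<le> a n"
  shows "real q * a m \<le> a (q * m)"
proof (induction q)
  case 0
  then show ?case using nn by simp
next
  case (Suc q)
  have "real (Suc q) * a m = a m + real q * a m" by (simp add: algebra_simps)
  also have "\<dots> \<le> a m + a (q * m)" using Suc by simp
  also have "\<dots> \<le> a (m + q * m)" by (rule sup)
  finally show ?case by simp
qed

lemma fekete:
  fixes a :: "nat \<Rightarrow> real"
  assumes sup: "\<And>m n. a m + a n \<le> a (m + n)" and nn: "\<And>n. 0 \<le> a n"
    and bd: "\<And>n. a n / real n \<le> B"
  shows "(\<lambda>n. a n / real n) \<longlonglongrightarrow> (SUP n. a n / real n)"
proof -
  define f where "f = (\<lambda>n. a n / real n)"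
  define S where "S = (SUP n. f n)"
  have bdd: "bdd_above (range f)" unfolding f_def using bd by (intro bdd_aboveI2) 
  have up: "f n \<le> S" for n unfolding S_def by (rule cSUP_upper[OF UNIV_I bdd])
  have fnn: "0 \<le> f n" for n unfolding f_def using nn by simp
  have "f \<longlonglongrightarrow> S"
  proof (rule order_tendstoI)
    fix y assume "y < S"
    then obtain m where m: "y < f m" unfolding S_def using less_cSUP_iff[OF _ bdd] by blast
    show "\<forall>\<^sub>F n in sequentially. y < f n"
    proof (cases "m = 0")
      case True
      then have "y < 0" using m unfolding f_def by simp
      then show ?thesis using fnn by (intro always_eventually) (meson less_le_trans)
    next
      case False
      define c where "c = f m"
      have "(\<lambda>n. (1 - real m / real n) * c) \<longlonglongrightarrow> (1 - 0) * c"
        by (intro tendsto_intros tendsto_divide_0[OF tendsto_const] filterlim_real_sequentially)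
      then have "\<forall>\<^sub>F n in sequentially. y < (1 - real m / real n) * c"
        using m unfolding c_def by (intro order_tendstoD(1)) auto
      moreover have "\<forall>\<^sub>F n in sequentially. (1 - real m / real n) * c \<le> f n"
        using eventually_gt_at_top[of 0]
      proof eventually_elim
        case (elim n)
        define q where "q = n div m"
        have nq: "n = q * m + n mod m" unfolding q_def by simp
        have "n < (q + 1) * m" using False unfolding q_def
          by (metis add.commute dividend_less_div_times mult_Suc nat_neq_iff not_gr0 plus_1_eq_Suc)
        then have qr: "real n - real m \<le> real q * real m"
          by (simp add: algebra_simps flip: of_nat_mult of_nat_add)
        have "a n \<ge> a (q * m) + a (n mod m)" using sup[of "q * m" "n mod m"] nq by simp
        then have an: "a n \<ge> real q * a m" using superadd_mult[OF sup nn, of q m] nn[of "n mod m"] by linarith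
        have mpos: "real m > 0" using False by simp
        have npos: "real n > 0" using elim by simp
        have "(1 - real m / real n) * c = (real n - real m) * a m / (real n * real m)"
          unfolding c_def f_def using mpos npos by (simp add: field_simps)
        also have "\<dots> \<le> (real q * real m) * a m / (real n * real m)"
          using qr nn[of m] mpos npos by (intro divide_right_mono mult_right_mono) auto
        also have "\<dots> = real q * a m / real n" using mpos by simp
        also have "\<dots> \<le> a n / real n" using an npos by (simp add: divide_right_mono)
        finally show ?case unfolding f_def .
      qed
      ultimately show ?thesis by eventually_elim auto
    qed
  next
    fix y assume "S < y"
    then show "\<forall>\<^sub>F n in sequentially. f n < y" using up by (intro always_eventually) (meson le_less_trans)
  qed
  then show ?thesis unfolding f_def S_def by simp
qed


theorem theorem2:
  assumes "diagonal_conjecture"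
    and "convergent (\<lambda>r. real (ramsey (replicate r 3)) powr (1 / real r))"
  shows "\<forall>k\<ge>3. convergent (\<lambda>r. real (ramsey (replicate r k)) powr (1 / real r))"
proof (intro allI impI)
  fix k :: nat assume k: "3 \<le> k"
  define R where "R = (\<lambda>r. real (ramsey (replicate r k)))"
  define R3 where "R3 = (\<lambda>r. real (ramsey (replicate r 3)))"
  have R2: "R r \<ge> 2" for r unfolding R_def using ramsey_ge2[of "replicate r k"] k by auto
  have R32: "R3 r \<ge> 2" for r unfolding R3_def using ramsey_ge2[of "replicate r 3"] by auto
  define a where "a = (\<lambda>r. ln (R r - 1))"
  have nn: "0 \<le> a r" for r unfolding a_def using R2[of r] by simp
  have sup: "a m + a n \<le> a (m + n)" for m n
  proof -
    have "(ramsey (replicate m k) - 1) * (ramsey (replicate n k) - 1) \<le> ramsey (replicate m k @ replicate n k) - 1"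
      using k by (intro ramsey_supermult) auto
    then have "(ramsey (replicate m k) - 1) * (ramsey (replicate n k) - 1) \<le> ramsey (replicate (m + n) k) - 1"
      by (simp add: replicate_add)
    then have "real ((ramsey (replicate m k) - 1) * (ramsey (replicate n k) - 1)) \<le> real (ramsey (replicate (m + n) k) - 1)"
      by (simp only: of_nat_le_iff)
    moreover have "ramsey (replicate j k) \<ge> 1" for j using R2[of j] unfolding R_def by simp
    ultimately have "(R m - 1) * (R n - 1) \<le> R (m + n) - 1"
      unfolding R_def by (simp add: of_nat_diff)
    moreover have "R m - 1 > 0" "R n - 1 > 0" using R2[of m] R2[of n] by auto
    ultimately have "ln ((R m - 1) * (R n - 1)) \<le> ln (R (m + n) - 1)"
      using R2[of "m + n"] by (subst ln_le_cancel_iff) auto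
    then show ?thesis unfolding a_def using \<open>R m - 1 > 0\<close> \<open>R n - 1 > 0\<close> by (simp add: ln_mult)
  qed
  obtain B where B: "B > 0" "\<And>m. norm (R3 m powr (1 / real m)) \<le> B"
    using convergent_imp_Bseq[OF assms(2)] unfolding R3_def by (auto elim: BseqE)
  have lnB: "ln (R3 m) / real m \<le> ln B" if "m \<ge> 1" for m
  proof -
    have "ln (R3 m) / real m = ln (R3 m powr (1 / real m))" by simp
    also have "\<dots> \<le> ln B" using B(2)[of m] R32[of m] B(1) by (subst ln_le_cancel_iff) auto
    finally show ?thesis .
  qed
  have bd: "a r / real r \<le> real (k - 2) * \<bar>ln B\<bar>" for r
  proof (cases "r = 0")
    case True
    then show ?thesis by simp
  next
    case False
    define m where "m = r * (k - 2)"
    have m1: "m \<ge> 1" unfolding m_def using False k by simp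
    have "a r \<le> ln (R r)" unfolding a_def using R2[of r] by simp
    also have "\<dots> \<le> ln (R3 m)" unfolding R_def R3_def m_def
      using dc_bound[OF assms(1) k, of r] R2[of r] unfolding R_def by simp
    also have "\<dots> = real m * (ln (R3 m) / real m)" using m1 by simp
    also have "\<dots> \<le> real m * \<bar>ln B\<bar>" using lnB[OF m1] by (intro mult_left_mono) auto
    finally have "a r \<le> real r * (real (k - 2) * \<bar>ln B\<bar>)" unfolding m_def by simp
    then show ?thesis using False by (simp add: field_simps)
  qed
  have fk: "(\<lambda>r. a r / real r) \<longlonglongrightarrow> (SUP r. a r / real r)"
    by (rule fekete[OF sup nn bd])
  define L where "L = (SUP r. a r / real r)"
  have "(\<lambda>r. ln (R r) / real r) \<longlonglongrightarrow> L"
  proof (rule tendsto_sandwich)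
    show "\<forall>\<^sub>F r in sequentially. a r / real r \<le> ln (R r) / real r"
    proof (intro always_eventually allI divide_right_mono)
      fix r
      show "a r \<le> ln (R r)" unfolding a_def using R2[of r] by (subst ln_le_cancel_iff) auto
    qed simp
    show "\<forall>\<^sub>F r in sequentially. ln (R r) / real r \<le> a r / real r + ln 2 / real r"
    proof (intro always_eventually allI)
      fix r
      have "R r \<le> 2 * (R r - 1)" using R2[of r] by simp
      then have "ln (R r) \<le> ln (2 * (R r - 1))" using R2[of r] by simp
      also have "\<dots> = ln 2 + a r" unfolding a_def using R2[of r] by (subst ln_mult) auto
      finally show "ln (R r) / real r \<le> a r / real r + ln 2 / real r"
        by (simp add: add_divide_distrib[symmetric] divide_right_mono add.commute)
    qed
    show "(\<lambda>r. a r / real r) \<longlonglongrightarrow> L" using fk unfolding L_def .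
    have "(\<lambda>r. a r / real r + ln 2 / real r) \<longlonglongrightarrow> L + 0"
      by (intro tendsto_add fk[folded L_def] tendsto_divide_0[OF tendsto_const filterlim_at_top_imp_at_infinity[OF filterlim_real_sequentially]])
    then show "(\<lambda>r. a r / real r + ln 2 / real r) \<longlonglongrightarrow> L" by simp
  qed
  then have "(\<lambda>r. exp (ln (R r) / real r)) \<longlonglongrightarrow> exp L" by (rule tendsto_exp)
  moreover have "R r powr (1 / real r) = exp (ln (R r) / real r)" for r
    using R2[of r] by (simp add: powr_def)
  ultimately have "(\<lambda>r. R r powr (1 / real r)) \<longlonglongrightarrow> exp L" by simp
  then show "convergent (\<lambda>r. real (ramsey (replicate r k)) powr (1 / real r))"
    unfolding R_def by (rule convergentI)
qed

end
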